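(* Let $m\ge 2$ be an integer and let $F\subseteq\mathbb Z$ be a finite nonempty set whose elements all lie in a single congruence class modulo $m$, and this class is not $0\bmod m$. Then $C=m\mathbb N\cup F$ arises as a minimal additive complement in $\mathbb Z$.
   Context: $\mathbb N=\{0,1,2,\dots\}$ and $m\mathbb N=\{mk:k\in\mathbb N\}$. For $C,W\subseteq\mathbb Z$, $C+W=\{c+w:c\in C,w\in W\}$. $C$ is a minimal additive complement (MAC) to $W$ if $C+W=\mathbb Z$ and no proper subset $C'\subsetneq C$ satisfies $C'+W=\mathbb Z$. $C$ arises as a MAC if there exists $W\subseteq\mathbb Z$ to which $C$ is a MAC. *)

theory Defs
  imports Main
begin

definition sumset :: "int set \<Rightarrow> int set \<Rightarrow> int set" where
  "sumset C W = {c + w | c w. c \<in> C \<and> w \<in> W}"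

definition is_MAC :: "int set \<Rightarrow> int set \<Rightarrow> bool" where
  "is_MAC C W \<longleftrightarrow> sumset C W = UNIV \<and> (\<forall>C'. C' \<subset> C \<longrightarrow> sumset C' W \<noteq> UNIV)"

definition arises_as_MAC :: "int set \<Rightarrow> bool" where
  "arises_as_MAC C \<longleftrightarrow> (\<exists>W. is_MAC C W)"

end

theory Submission
  imports Defs
begin

lemma dvd_lin: "(m::int) dvd a \<Longrightarrow> m dvd b \<Longrightarrow> c = a - b \<Longrightarrow> m dvd c"
  by simp

theorem proposition2:
  fixes m :: int and F :: "int set" and r :: int
  assumes "m \<ge> 2"
    and "finite F" and "F \<noteq> {}"
    and "\<forall>f\<in>F. f mod m = r mod m"
    and "r mod m \<noteq> 0"
  shows "arises_as_MAC ({m * int k | k. True} \<union> F)"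
proof -
  note m2 = assms(1) and finF = assms(2) and Fne = assms(3)
  define C where "C = {m * int k | k. True} \<union> F"
  define M where "M = Max F"
  define A where "A = Max (abs ` F)"
  have fA: "\<And>f. f\<in>F \<Longrightarrow> \<bar>f\<bar> \<le> A" unfolding A_def using finF by simp
  have A0: "A \<ge> 0" using Fne fA by force
  have fM: "\<And>f. f\<in>F \<Longrightarrow> f \<le> M" unfolding M_def using finF by simp
  have MF: "M \<in> F" unfolding M_def using finF Fne by simp
  have MA: "M \<le> A" using fA[OF MF] by simp
  define K where "K = 4*A+1"
  define L where "L = K*A + 4*A + 1"
  define zz where "zz g = m*(K*g - L)" for g
  have K0: "K \<ge> 1" unfolding K_def using A0 by simp
  have zz_le: "zz g \<le> -4*A-1" if g: "g\<in>F" for g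
  proof -
    have "K*g \<le> K*A" using K0 fA[OF g] by (intro mult_left_mono) auto
    then have t: "K*g - L \<le> -4*A-1" unfolding L_def by simp
    have "(m - 1) * (K*g - L) \<le> 0" using m2 t A0 by (intro mult_nonneg_nonpos) auto
    then have "m*(K*g - L) \<le> K*g - L" by (simp add: algebra_simps)
    then show ?thesis unfolding zz_def using t by simp
  qed
  have zz_lb: "zz g \<ge> -m*(K*A+L)" if g: "g\<in>F" for g
  proof -
    have "K*(-A) \<le> K*g" using K0 fA[OF g] by (intro mult_left_mono) auto
    then have "-(K*A+L) \<le> K*g - L" by simp
    then have "m*(-(K*A+L)) \<le> m*(K*g - L)" using m2 by (intro mult_left_mono) auto
    then show ?thesis unfolding zz_def by (simp add: algebra_simps)
  qed
  have zz_sep: "\<bar>zz g - zz h\<bar> \<ge> K" if "g \<noteq> h" for g h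
  proof -
    have e: "zz g - zz h = K * (m * (g - h))" unfolding zz_def by (simp add: algebra_simps)
    have "\<bar>g - h\<bar> \<ge> 1" using that by simp
    then have "1 * 1 \<le> m * \<bar>g - h\<bar>" using m2 by (intro mult_mono) auto
    then have "m * \<bar>g - h\<bar> \<ge> 1" by simp
    then have "K * 1 \<le> K * (m * \<bar>g - h\<bar>)" using K0 by (intro mult_left_mono) auto
    then show ?thesis using e m2 K0 by (simp add: abs_mult)
  qed
  have zz_uniq: "g = g'" if "g\<in>F" "g'\<in>F" "zz g - zz g' = d" "\<bar>d\<bar> \<le> 4*A" for g g' d
    using zz_sep[of g g'] that unfolding K_def by force
  define X where "X = {zz g - h | g h. g\<in>F \<and> h\<in>F \<and> h\<noteq>g}"
  define V where "V = {v. m dvd (v + r) \<and> v \<le> -M-1 \<and> v \<notin> X}"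
  define W where "W = {0} \<union> {w. \<not> m dvd w \<and> \<not> m dvd (w+r)} \<union> V"
  have nr: "\<not> m dvd r" using assms(5) by (simp add: dvd_eq_mod_eq_0)
  have Fr: "m dvd (f - r)" if "f\<in>F" for f using assms(4) that by (simp add: mod_eq_dvd_iff)
  have mkC: "m * int k \<in> C" for k unfolding C_def by blast
  have cover: "sumset C W = UNIV"
  proof (rule set_eqI, simp)
    fix z :: int
    show "z \<in> sumset C W"
    proof (cases "m dvd z")
      case True
      show ?thesis
      proof (cases "z \<ge> 0")
        case True
        from \<open>m dvd z\<close> obtain q where q: "z = m*q" by blast
        with True m2 have "q \<ge> 0" by (simp add: zero_le_mult_iff)
        then have "z = m * int (nat q) + 0" using q by simp
        moreover have "(0::int) \<in> W" unfolding W_def by simp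
        ultimately show ?thesis unfolding sumset_def using mkC by blast
      next
        case False
        have "\<exists>f\<in>F. z - f \<in> V"
        proof (cases "z \<ge> -2*A")
          case True
          have "z - M \<notin> X"
          proof
            assume "z - M \<in> X"
            then obtain g h where gh: "g\<in>F" "h\<in>F" "z - M = zz g - h" unfolding X_def by blast
            have "z = zz g - h + M" using gh by simp
            also have "\<dots> \<le> -4*A-1 + A + A" using zz_le[OF gh(1)] fA[OF gh(2)] MA by simp
            finally show False using True by simp
          qed
          moreover have "m dvd (z - M + r)" using \<open>m dvd z\<close> Fr[OF MF]
            by - (rule dvd_lin[of m z "M - r"], auto)
          ultimately have "z - M \<in> V" using False unfolding V_def by simp
          then show ?thesis using MF by blast
        next
          case Tz: False
          show ?thesis
          proof (rule ccontr)
            assume nV: "\<not> ?thesis"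
            then have allX: "z - f \<in> X" if "f\<in>F" for f
            proof -
              have "m dvd (z - f + r)" using \<open>m dvd z\<close> Fr[OF that]
                by - (rule dvd_lin[of m z "f - r"], auto)
              moreover have "z - f \<le> -M-1" using Tz fA[OF that] MA by simp
              ultimately have "z - f \<notin> V \<Longrightarrow> z - f \<in> X" unfolding V_def by simp
              then show ?thesis using nV that by blast
            qed
            obtain g0 h0 where g0: "g0\<in>F" "h0\<in>F" "h0\<noteq>g0" "z - M = zz g0 - h0"
              using allX[OF MF] unfolding X_def by blast
            define \<phi> where "\<phi> f = f + (zz g0 - z)" for f
            have img: "\<phi> f \<in> F - {g0}" if f: "f\<in>F" for f
            proof -
              obtain g h where gh: "g\<in>F" "h\<in>F" "h\<noteq>g" "z - f = zz g - h"
                using allX[OF f] unfolding X_def by blast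
              have "zz g - zz g0 = (h - f) - (h0 - M)" using gh g0 by simp
              moreover have "\<bar>(h - f) - (h0 - M)\<bar> \<le> 4*A"
                using fA[OF gh(2)] fA[OF f] fA[OF g0(2)] fA[OF MF] by simp
              ultimately have "g = g0" using zz_uniq gh g0 by blast
              then have "h = \<phi> f" unfolding \<phi>_def using gh by simp
              then show ?thesis using gh \<open>g = g0\<close> by simp
            qed
            have "inj_on \<phi> F" unfolding \<phi>_def inj_on_def by simp
            then have "card F \<le> card (F - {g0})"
              using img finF by (intro card_inj_on_le) auto
            moreover have "card (F - {g0}) = card F - 1" using g0 finF by simp
            moreover have "card F \<ge> 1" using g0 finF
              using card_gt_0_iff[of F] by (simp add: Suc_le_eq) blast
            ultimately show False by simp
          qed
        qed
        then obtain f where f: "f\<in>F" "z - f \<in> V" by blast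
        then have "z = f + (z - f)" "f \<in> C" "z - f \<in> W" unfolding C_def W_def by auto
        then show ?thesis unfolding sumset_def by blast
      qed
    next
      case nz: False
      show ?thesis
      proof (cases "m dvd (z + r)")
        case False
        then have "z \<in> W" using nz unfolding W_def by simp
        moreover have "z = m * int 0 + z" by simp
        ultimately show ?thesis unfolding sumset_def using mkC by blast
      next
        case True
        define j where "j = nat (\<bar>z\<bar> + m*(K*A+L) + A + 1)"
        define v where "v = z - m * int j"
        have p: "m*(K*A+L) \<ge> 0" using m2 K0 A0 unfolding L_def by simp
        have j: "int j = \<bar>z\<bar> + m*(K*A+L) + A + 1" unfolding j_def using p A0 by simp
        have "int j \<le> m * int j" using m2 by (simp add: mult_le_cancel_right1)
        then have vle: "v \<le> - m*(K*A+L) - A - 1" unfolding v_def using j by simp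
        have "m dvd (v + r)" unfolding v_def using True
          by - (rule dvd_lin[of m "z + r" "m * int j"], auto)
        moreover have "v \<le> -M-1" using vle p MA by simp
        moreover have "v \<notin> X"
        proof
          assume "v \<in> X"
          then obtain g h where gh: "g\<in>F" "h\<in>F" "v = zz g - h" unfolding X_def by blast
          then show False using zz_lb[OF gh(1)] fA[OF gh(2)] vle by simp
        qed
        ultimately have "v \<in> W" unfolding W_def V_def by simp
        moreover have "z = m * int j + v" unfolding v_def by simp
        ultimately show ?thesis unfolding sumset_def using mkC by blast
      qed
    qed
  qed
  have wit_k: "m * int k \<notin> sumset C' W" if "C' \<subseteq> C" "m * int k \<notin> C'" for k C'
  proof
    assume "m * int k \<in> sumset C' W"
    then obtain c w where cw: "c \<in> C'" "w \<in> W" "m * int k = c + w" unfolding sumset_def by blast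
    then have "c \<in> C" using that by blast
    then consider (a) k' where "c = m * int k'" | (b) "c \<in> F" unfolding C_def by blast
    then show False
    proof cases
      case a
      then have we: "w = m * int k - m * int k'" using cw by simp
      have wd: "m dvd w" by (rule dvd_lin[OF dvd_triv_left dvd_triv_left we])
      then have "w = 0 \<or> w \<in> V" using cw unfolding W_def by auto
      then show False
      proof
        assume "w = 0" then show False using cw that by simp
      next
        assume "w \<in> V" then have "m dvd (w + r)" unfolding V_def by simp
        then show False using wd nr dvd_lin[of m "w + r" w r] by auto
      qed
    next
      case b
      have we: "w + r = m * int k - (c - r)" using cw by simp
      have wr: "m dvd (w + r)" by (rule dvd_lin[OF dvd_triv_left Fr[OF b] we])
      then have "w = 0 \<or> w \<in> V" using cw unfolding W_def by auto
      then show False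
      proof
        assume "w = 0" then show False using cw b Fr[OF b] nr
          using dvd_lin[of m "m * int k" "c - r" r] by auto
      next
        assume "w \<in> V" then have "w \<le> -M-1" unfolding V_def by simp
        then show False using cw fM[OF b] m2 by (simp add: zero_le_mult_iff) (smt (verit) of_nat_0_le_iff zero_le_mult_iff)
      qed
    qed
  qed
  have wit_f: "zz f \<notin> sumset C' W" if f: "f \<in> F" and "C' \<subseteq> C" "f \<notin> C'" for f C'
  proof
    assume "zz f \<in> sumset C' W"
    then obtain c w where cw: "c \<in> C'" "w \<in> W" "zz f = c + w" unfolding sumset_def by blast
    have zd: "m dvd zz f" unfolding zz_def by simp
    have "c \<in> C" using that cw by blast
    then consider (a) k' where "c = m * int k'" | (b) "c \<in> F" unfolding C_def by blast
    then show False
    proof cases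
      case a
      then have we: "w = m * (K*f-L) - m * int k'" using cw unfolding zz_def by simp
      have wd: "m dvd w" by (rule dvd_lin[OF dvd_triv_left dvd_triv_left we])
      then have "w = 0 \<or> w \<in> V" using cw unfolding W_def by auto
      then show False
      proof
        assume "w = 0" then show False using cw a zz_le[OF f] A0 m2 by (smt (verit) of_nat_0_le_iff zero_le_mult_iff)
      next
        assume "w \<in> V" then have "m dvd (w + r)" unfolding V_def by simp
        then show False using wd nr dvd_lin[of m "w + r" w r] by auto
      qed
    next
      case b
      have cf: "c \<noteq> f" using cw that by blast
      have wr: "m dvd (w + r)"
      proof -
        have we: "w + r = zz f - (c - r)" using cw by simp
        show ?thesis by (rule dvd_lin[OF zd Fr[OF b] we])
      qed
      then have "w = 0 \<or> w \<in> V" using cw unfolding W_def by auto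
      then show False
      proof
        assume "w = 0" then show False using wr nr by simp
      next
        assume "w \<in> V" then have "w \<notin> X" unfolding V_def by simp
        moreover have "w = zz f - c" using cw by simp
        ultimately show False unfolding X_def using f b cf by blast
      qed
    qed
  qed
  have "is_MAC C W"
    unfolding is_MAC_def
  proof (intro conjI allI impI)
    show "sumset C W = UNIV" by (rule cover)
    fix C' assume "C' \<subset> C"
    then obtain c where c: "c \<in> C" "c \<notin> C'" by blast
    then consider (a) k where "c = m * int k" | (b) "c \<in> F" unfolding C_def by blast
    then show "sumset C' W \<noteq> UNIV"
    proof cases
      case a then show ?thesis using wit_k[of C' k] \<open>C' \<subset> C\<close> c by auto
    next
      case b then show ?thesis using wit_f[of c C'] \<open>C' \<subset> C\<close> c by auto
    qed
  qed
  then show ?thesis unfolding arises_as_MAC_def C_def by blast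
qed

end
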